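(* Let $G$ be a simple stochastic game, $A$ a subset of the arcs of $G$, and $\sigma,\sigma'$ two positional MAX strategies. If $\sigma' \succ_{G[A,\sigma]} \sigma$, then $\sigma' >_G \sigma$.
   Context: A simple stochastic game (SSG) $G$ is a finite directed graph whose vertex set is partitioned into MAX vertices, MIN vertices, random vertices and a nonempty set of sinks; every non-sink vertex has at least one outgoing arc, every sink has exactly one outgoing arc, a self-loop; each random vertex $x$ carries a rational probability distribution $p_x$ on its out-neighbourhood, positive on every out-neighbour; each sink $s$ has rational value $\mathrm{Val}(s)\in[0,1]$. The game is not assumed to be stopping. A positional MAX (resp. MIN) strategy assigns to each MAX (resp. MIN) vertex one of its out-neighbours. Under $\sigma,\tau$ from start $x_0$, the random play moves from MAX vertex $x$ to $\sigma(x)$, from MIN vertex $x$ to $\tau(x)$, from random vertex $x$ to an out-neighbour drawn by $p_x$ independently, and stays at a sink once reached; its value is $\mathrm{Val}(s)$ if it reaches sink $s$, else $0$ (in particular if it never reaches a sink), and $v^G_{\sigma,\tau}(x_0)$ is its expectation. $v^G_\sigma:=v^G_{\sigma,\tau}$ for a best response $\tau$, i.e. a MIN strategy with $v_{\sigma,\tau}\le v_{\sigma,\tau'}$ pointwise for all MIN strategies $\tau'$ (a positional one exists). Vectors are compared pointwise: $v\ge v'$ if $v(x)\ge v'(x)$ for all $x$, and $v>v'$ if $v\ge v'$ and $v\ne v'$. We write $\sigma'>_G\sigma$ if $v^G_{\sigma'}>v^G_\sigma$, and $\sigma'\succ_G\sigma$ if $\sigma'>_G\sigma$ and, for every MAX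 vertex $x$ with $v^G_{\sigma'}(x)=v^G_\sigma(x)$, $\sigma'(x)=\sigma(x)$. Transformed game: $G[A,\sigma]$ is obtained from a copy of $G$ by replacing each arc $e=(x,y)\in A$ by an arc $(x,s_e)$ to a new sink $s_e$ of value $v^G_\sigma(y)$ (for random $x$, $p_x(s_e)=p_x(y)$); $y$ is kept. Strategies of $G$ and $G[A,\sigma]$ are identified (a MAX vertex $x$ with $\sigma(x)=y$, $(x,y)\in A$, moves to $s_{(x,y)}$), and value vectors in $G[A,\sigma]$ are compared only on the vertices of $G$. *)

theory Defs
  imports "HOL-Probability.Probability_Mass_Function"
begin

record 'v ssg =
  verts :: "'v set"
  maxv  :: "'v set"
  minv  :: "'v set"
  randv :: "'v set"
  sinks :: "'v set"
  arcs  :: "('v \<times> 'v) set"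
  prob  :: "'v \<Rightarrow> 'v \<Rightarrow> real"
  sval  :: "'v \<Rightarrow> real"

definition out :: "('v, 'b) ssg_scheme \<Rightarrow> 'v \<Rightarrow> 'v set" where
  "out G x = {y. (x, y) \<in> arcs G}"

definition ssg :: "('v, 'b) ssg_scheme \<Rightarrow> bool" where
  "ssg G \<longleftrightarrow>
     finite (verts G) \<and>
     maxv G \<union> minv G \<union> randv G \<union> sinks G = verts G \<and>
     maxv G \<inter> minv G = {} \<and> maxv G \<inter> randv G = {} \<and> maxv G \<inter> sinks G = {} \<and>
     minv G \<inter> randv G = {} \<and> minv G \<inter> sinks G = {} \<and> randv G \<inter> sinks G = {} \<and>
     sinks G \<noteq> {} \<and>
     arcs G \<subseteq> verts G \<times> verts G \<and>
     (\<forall>x \<in> verts G - sinks G. out G x \<noteq> {}) \<and>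
     (\<forall>s \<in> sinks G. out G s = {s}) \<and>
     (\<forall>x \<in> randv G. (\<forall>y \<in> out G x. prob G x y > 0 \<and> prob G x y \<in> \<rat>) \<and>
                      (\<Sum>y \<in> out G x. prob G x y) = 1) \<and>
     (\<forall>s \<in> sinks G. 0 \<le> sval G s \<and> sval G s \<le> 1 \<and> sval G s \<in> \<rat>)"

text \<open>Positional strategies (values outside the player's vertices are irrelevant).\<close>
definition is_max_strategy :: "('v, 'b) ssg_scheme \<Rightarrow> ('v \<Rightarrow> 'v) \<Rightarrow> bool" where
  "is_max_strategy G \<sigma> \<longleftrightarrow> (\<forall>x \<in> maxv G. (x, \<sigma> x) \<in> arcs G)"

definition is_min_strategy :: "('v, 'b) ssg_scheme \<Rightarrow> ('v \<Rightarrow> 'v) \<Rightarrow> bool" where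
  "is_min_strategy G \<tau> \<longleftrightarrow> (\<forall>x \<in> minv G. (x, \<tau> x) \<in> arcs G)"

definition step :: "('v, 'b) ssg_scheme \<Rightarrow> ('v \<Rightarrow> 'v) \<Rightarrow> ('v \<Rightarrow> 'v) \<Rightarrow> 'v \<Rightarrow> 'v pmf" where
  "step G \<sigma> \<tau> x =
     (if x \<in> sinks G then return_pmf x
      else if x \<in> maxv G then return_pmf (\<sigma> x)
      else if x \<in> minv G then return_pmf (\<tau> x)
      else embed_pmf (\<lambda>y. if y \<in> out G x then prob G x y else 0))"

primrec state_dist :: "('v, 'b) ssg_scheme \<Rightarrow> ('v \<Rightarrow> 'v) \<Rightarrow> ('v \<Rightarrow> 'v) \<Rightarrow> nat \<Rightarrow> 'v \<Rightarrow> 'v pmf" where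
  "state_dist G \<sigma> \<tau> 0 x = return_pmf x"
| "state_dist G \<sigma> \<tau> (Suc n) x = bind_pmf (state_dist G \<sigma> \<tau> n x) (step G \<sigma> \<tau>)"

text \<open>Probability that the play from x reaches sink s (sinks are absorbing, so
  this is the limit of the probability of being at s at time n).\<close>
definition reach_prob :: "('v, 'b) ssg_scheme \<Rightarrow> ('v \<Rightarrow> 'v) \<Rightarrow> ('v \<Rightarrow> 'v) \<Rightarrow> 'v \<Rightarrow> 'v \<Rightarrow> real" where
  "reach_prob G \<sigma> \<tau> x s = lim (\<lambda>n. pmf (state_dist G \<sigma> \<tau> n x) s)"

definition play_value :: "('v, 'b) ssg_scheme \<Rightarrow> ('v \<Rightarrow> 'v) \<Rightarrow> ('v \<Rightarrow> 'v) \<Rightarrow> 'v \<Rightarrow> real" where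
  "play_value G \<sigma> \<tau> x = (\<Sum>s \<in> sinks G. sval G s * reach_prob G \<sigma> \<tau> x s)"

definition is_best_response :: "('v, 'b) ssg_scheme \<Rightarrow> ('v \<Rightarrow> 'v) \<Rightarrow> ('v \<Rightarrow> 'v) \<Rightarrow> bool" where
  "is_best_response G \<sigma> \<tau> \<longleftrightarrow> is_min_strategy G \<tau> \<and>
     (\<forall>\<tau>'. is_min_strategy G \<tau>' \<longrightarrow> (\<forall>x \<in> verts G. play_value G \<sigma> \<tau> x \<le> play_value G \<sigma> \<tau>' x))"

definition max_value :: "('v, 'b) ssg_scheme \<Rightarrow> ('v \<Rightarrow> 'v) \<Rightarrow> 'v \<Rightarrow> real" where
  "max_value G \<sigma> x = play_value G \<sigma> (SOME \<tau>. is_best_response G \<sigma> \<tau>) x"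

definition strat_gt :: "('v, 'b) ssg_scheme \<Rightarrow> 'v set \<Rightarrow> ('v \<Rightarrow> 'v) \<Rightarrow> ('v \<Rightarrow> 'v) \<Rightarrow> bool" where
  "strat_gt G W \<sigma>' \<sigma> \<longleftrightarrow>
     (\<forall>x \<in> W. max_value G \<sigma> x \<le> max_value G \<sigma>' x) \<and>
     (\<exists>x \<in> W. max_value G \<sigma> x \<noteq> max_value G \<sigma>' x)"

definition strat_succ :: "('v, 'b) ssg_scheme \<Rightarrow> 'v set \<Rightarrow> ('v \<Rightarrow> 'v) \<Rightarrow> ('v \<Rightarrow> 'v) \<Rightarrow> bool" where
  "strat_succ G W \<sigma>' \<sigma> \<longleftrightarrow> strat_gt G W \<sigma>' \<sigma> \<and>
     (\<forall>x \<in> maxv G. max_value G \<sigma>' x = max_value G \<sigma> x \<longrightarrow> \<sigma>' x = \<sigma> x)"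

text \<open>Vertices: Inl x for x a vertex of G, Inr e for the new sink s_e (e \<in> A).\<close>
definition transform :: "('v, 'b) ssg_scheme \<Rightarrow> ('v \<times> 'v) set \<Rightarrow> ('v \<Rightarrow> 'v) \<Rightarrow> ('v + 'v \<times> 'v) ssg" where
  "transform G A \<sigma> = \<lparr>
     verts = Inl ` verts G \<union> Inr ` A,
     maxv = Inl ` maxv G,
     minv = Inl ` minv G,
     randv = Inl ` randv G,
     sinks = Inl ` sinks G \<union> Inr ` A,
     arcs = {(Inl x, Inl y) | x y. (x, y) \<in> arcs G - A}
          \<union> {(Inl x, Inr (x, y)) | x y. (x, y) \<in> A}
          \<union> {(Inr e, Inr e) | e. e \<in> A},
     prob = (\<lambda>a b. case (a, b) of
               (Inl x, Inl y) \<Rightarrow> prob G x y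
             | (Inl x, Inr (x', y)) \<Rightarrow> (if x' = x then prob G x y else 0)
             | _ \<Rightarrow> 0),
     sval = (\<lambda>a. case a of Inl s \<Rightarrow> sval G s | Inr (x, y) \<Rightarrow> max_value G \<sigma> y) \<rparr>"

definition lift_strategy :: "('v \<times> 'v) set \<Rightarrow> ('v \<Rightarrow> 'v) \<Rightarrow> ('v + 'v \<times> 'v) \<Rightarrow> ('v + 'v \<times> 'v)" where
  "lift_strategy A \<sigma> a = (case a of
      Inl x \<Rightarrow> (if (x, \<sigma> x) \<in> A then Inr (x, \<sigma> x) else Inl (\<sigma> x))
    | Inr e \<Rightarrow> Inr e)"

end

theory Submission
  imports Defs
begin


definition cwf :: "('v, 'b) ssg_scheme \<Rightarrow> ('v \<Rightarrow> 'v) \<Rightarrow> ('v \<Rightarrow> 'v) \<Rightarrow> bool" where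
  "cwf X \<sigma> \<tau> \<longleftrightarrow> finite (verts X) \<and> sinks X \<subseteq> verts X \<and>
     (\<forall>x \<in> verts X. set_pmf (step X \<sigma> \<tau> x) \<subseteq> verts X)"

definition ES :: "('v, 'b) ssg_scheme \<Rightarrow> ('v \<Rightarrow> 'v) \<Rightarrow> ('v \<Rightarrow> 'v) \<Rightarrow> ('v \<Rightarrow> real) \<Rightarrow> 'v \<Rightarrow> real" where
  "ES X \<sigma> \<tau> f x = (\<Sum>y\<in>verts X. pmf (step X \<sigma> \<tau> x) y * f y)"

definition fn :: "('v, 'b) ssg_scheme \<Rightarrow> ('v \<Rightarrow> 'v) \<Rightarrow> ('v \<Rightarrow> 'v) \<Rightarrow> nat \<Rightarrow> 'v \<Rightarrow> real" where
  "fn X \<sigma> \<tau> n x = (\<Sum>s\<in>sinks X. sval X s * pmf (state_dist X \<sigma> \<tau> n x) s)"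

lemma step_sink: "s \<in> sinks X \<Longrightarrow> step X \<sigma> \<tau> s = return_pmf s"
  by (simp add: step_def)

lemma sd_sink: "s \<in> sinks X \<Longrightarrow> state_dist X \<sigma> \<tau> n s = return_pmf s"
  by (induction n) (auto simp: step_sink bind_return_pmf)

lemma sd_Suc': "state_dist X \<sigma> \<tau> (Suc n) x = bind_pmf (step X \<sigma> \<tau> x) (state_dist X \<sigma> \<tau> n)"
proof (induction n arbitrary: x)
  case 0 then show ?case by (simp add: bind_return_pmf bind_return_pmf')
next
  case (Suc n)
  have "state_dist X \<sigma> \<tau> (Suc (Suc n)) x = bind_pmf (state_dist X \<sigma> \<tau> (Suc n) x) (step X \<sigma> \<tau>)" by simp
  also have "\<dots> = bind_pmf (step X \<sigma> \<tau> x) (\<lambda>y. bind_pmf (state_dist X \<sigma> \<tau> n y) (step X \<sigma> \<tau>))"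
    by (subst Suc.IH) (simp add: bind_assoc_pmf)
  finally show ?case by simp
qed

lemma sd_support: "cwf X \<sigma> \<tau> \<Longrightarrow> x \<in> verts X \<Longrightarrow> set_pmf (state_dist X \<sigma> \<tau> n x) \<subseteq> verts X"
  by (induction n) (auto simp: cwf_def)

lemma pmf_bind_fin:
  assumes "finite V" "set_pmf M \<subseteq> V"
  shows "pmf (bind_pmf M f) s = (\<Sum>y\<in>V. pmf M y * pmf (f y) s)"
  unfolding pmf_bind using assms
  by (subst integral_measure_pmf[of V]) auto

lemma pmf_sd_Suc:
  assumes "cwf X \<sigma> \<tau>" "x \<in> verts X"
  shows "pmf (state_dist X \<sigma> \<tau> (Suc n) x) s = (\<Sum>y\<in>verts X. pmf (step X \<sigma> \<tau> x) y * pmf (state_dist X \<sigma> \<tau> n y) s)"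
  using assms unfolding sd_Suc' by (intro pmf_bind_fin) (auto simp: cwf_def)

lemma pmf_sd_mono:
  assumes "cwf X \<sigma> \<tau>" "x \<in> verts X" "s \<in> sinks X"
  shows "pmf (state_dist X \<sigma> \<tau> n x) s \<le> pmf (state_dist X \<sigma> \<tau> (Suc n) x) s"
proof -
  have fin: "finite (verts X)" and sV: "s \<in> verts X" using assms by (auto simp: cwf_def)
  have "pmf (state_dist X \<sigma> \<tau> (Suc n) x) s = (\<Sum>y\<in>verts X. pmf (state_dist X \<sigma> \<tau> n x) y * pmf (step X \<sigma> \<tau> y) s)"
    using assms by (simp only: state_dist.simps, intro pmf_bind_fin) (auto simp: sd_support cwf_def)
  also have "\<dots> \<ge> pmf (state_dist X \<sigma> \<tau> n x) s * pmf (step X \<sigma> \<tau> s) s"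
    by (rule member_le_sum[OF sV]) (auto simp: fin)
  finally show ?thesis using assms(3) by (simp add: step_sink)
qed

lemma reach_lim:
  assumes "cwf X \<sigma> \<tau>" "x \<in> verts X" "s \<in> sinks X"
  shows "(\<lambda>n. pmf (state_dist X \<sigma> \<tau> n x) s) \<longlonglongrightarrow> reach_prob X \<sigma> \<tau> x s"
proof -
  have "(\<lambda>n. pmf (state_dist X \<sigma> \<tau> n x) s) \<longlonglongrightarrow> (SUP n. pmf (state_dist X \<sigma> \<tau> n x) s)"
    by (rule LIMSEQ_incseq_SUP) (auto intro!: bdd_aboveI[of _ 1] pmf_le_1 incseq_SucI pmf_sd_mono assms)
  then show ?thesis unfolding reach_prob_def by (metis limI)
qed

lemma fn_lim:
  assumes "cwf X \<sigma> \<tau>" "x \<in> verts X"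
  shows "(\<lambda>n. fn X \<sigma> \<tau> n x) \<longlonglongrightarrow> play_value X \<sigma> \<tau> x"
  unfolding fn_def play_value_def
  by (intro tendsto_sum tendsto_mult_left reach_lim assms)

lemma fn_Suc:
  assumes "cwf X \<sigma> \<tau>" "x \<in> verts X"
  shows "fn X \<sigma> \<tau> (Suc n) x = ES X \<sigma> \<tau> (fn X \<sigma> \<tau> n) x"
  unfolding fn_def ES_def pmf_sd_Suc[OF assms]
  by (simp add:  sum_distrib_left sum_distrib_right mult_ac sum.swap[of _ "sinks X"])

lemma fn_0: "finite (sinks X) \<Longrightarrow> fn X \<sigma> \<tau> 0 x = (if x \<in> sinks X then sval X x else 0)"
  unfolding fn_def by (simp add: indicator_def)

lemma fn_sink: "finite (sinks X) \<Longrightarrow> s \<in> sinks X \<Longrightarrow> fn X \<sigma> \<tau> n s = sval X s"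
  unfolding fn_def by (simp add: sd_sink indicator_def)

lemma ES_cong: "(\<And>y. y \<in> verts X \<Longrightarrow> f y = g y) \<Longrightarrow> ES X \<sigma> \<tau> f x = ES X \<sigma> \<tau> g x"
  unfolding ES_def by simp

lemma ES_mono: "(\<And>y. y \<in> verts X \<Longrightarrow> f y \<le> g y) \<Longrightarrow> ES X \<sigma> \<tau> f x \<le> ES X \<sigma> \<tau> g x"
  unfolding ES_def by (intro sum_mono mult_left_mono) auto

lemma ES_diff: "ES X \<sigma> \<tau> (\<lambda>y. f y - g y) x = ES X \<sigma> \<tau> f x - ES X \<sigma> \<tau> g x"
  unfolding ES_def by (simp add: right_diff_distrib sum_subtractf)

lemma pv_fix:
  assumes "cwf X \<sigma> \<tau>" "x \<in> verts X"
  shows "play_value X \<sigma> \<tau> x = ES X \<sigma> \<tau> (play_value X \<sigma> \<tau>) x"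
proof -
  have fin: "finite (verts X)" using assms by (auto simp: cwf_def)
  have "(\<lambda>n. fn X \<sigma> \<tau> (Suc n) x) \<longlonglongrightarrow> play_value X \<sigma> \<tau> x"
    using fn_lim[OF assms] by (rule LIMSEQ_Suc)
  moreover have "(\<lambda>n. fn X \<sigma> \<tau> (Suc n) x) \<longlonglongrightarrow> ES X \<sigma> \<tau> (play_value X \<sigma> \<tau>) x"
    unfolding fn_Suc[OF assms] ES_def
    by (intro tendsto_sum tendsto_mult_left fn_lim assms(1))
  ultimately show ?thesis by (rule LIMSEQ_unique)
qed

lemma pv_sink:
  assumes "cwf X \<sigma> \<tau>" "s \<in> sinks X"
  shows "play_value X \<sigma> \<tau> s = sval X s"
proof -
  have fin: "finite (sinks X)" using assms by (auto simp: cwf_def intro: finite_subset)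
  have sV: "s \<in> verts X" using assms by (auto simp: cwf_def)
  show ?thesis using fn_lim[OF assms(1) sV] fn_sink[OF fin assms(2)] by (simp add: LIMSEQ_const_iff)
qed

lemma pv_nonneg:
  assumes "cwf X \<sigma> \<tau>" "x \<in> verts X" "\<forall>s\<in>sinks X. 0 \<le> sval X s"
  shows "0 \<le> play_value X \<sigma> \<tau> x"
proof (rule LIMSEQ_le_const[OF fn_lim[OF assms(1,2)]])
  show "\<exists>N. \<forall>n\<ge>N. 0 \<le> fn X \<sigma> \<tau> n x"
    using assms(3) unfolding fn_def by (auto intro!: sum_nonneg)
qed

lemma pv_le:
  assumes "cwf X \<sigma> \<tau>" "\<forall>x\<in>verts X. 0 \<le> v x"
    and "\<forall>x\<in>verts X - sinks X. ES X \<sigma> \<tau> v x \<le> v x"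
    and "\<forall>s\<in>sinks X. sval X s \<le> v s" and "x \<in> verts X"
  shows "play_value X \<sigma> \<tau> x \<le> v x"
proof -
  have fin: "finite (sinks X)" using assms by (auto simp: cwf_def intro: finite_subset)
  have "\<forall>x\<in>verts X. fn X \<sigma> \<tau> n x \<le> v x" for n
  proof (induction n)
    case 0 then show ?case using assms by (auto simp: fn_0[OF fin])
  next
    case (Suc n)
    show ?case
    proof
      fix x assume x: "x \<in> verts X"
      show "fn X \<sigma> \<tau> (Suc n) x \<le> v x"
      proof (cases "x \<in> sinks X")
        case True then show ?thesis using assms fn_sink[OF fin True] by auto
      next
        case False
        have "fn X \<sigma> \<tau> (Suc n) x = ES X \<sigma> \<tau> (fn X \<sigma> \<tau> n) x" by (rule fn_Suc[OF assms(1) x])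
        also have "\<dots> \<le> ES X \<sigma> \<tau> v x" by (rule ES_mono) (use Suc in auto)
        also have "\<dots> \<le> v x" using assms(3) x False by auto
        finally show ?thesis .
      qed
    qed
  qed
  then show ?thesis using assms(5) by (intro LIMSEQ_le_const2[OF fn_lim[OF assms(1,5)]]) auto
qed

lemma pv_zero:
  assumes "cwf X \<sigma> \<tau>" "S \<subseteq> verts X - sinks X" "\<forall>x\<in>S. set_pmf (step X \<sigma> \<tau> x) \<subseteq> S" "x \<in> S"
  shows "play_value X \<sigma> \<tau> x = 0"
proof -
  have "set_pmf (state_dist X \<sigma> \<tau> n x) \<subseteq> S" for n
    by (induction n) (use assms in auto)
  then have "fn X \<sigma> \<tau> n x = 0" for n
    unfolding fn_def using assms(2) by (intro sum.neutral) (force simp: set_pmf_eq)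
  then show ?thesis using fn_lim[of X \<sigma> \<tau> x] assms by (auto simp: LIMSEQ_const_iff)
qed

lemma avg:
  fixes f :: "'a \<Rightarrow> real"
  assumes "finite V" "set_pmf M \<subseteq> V" "\<forall>y\<in>set_pmf M. f y \<le> D"
    and "D \<le> (\<Sum>y\<in>V. pmf M y * f y)" "y \<in> set_pmf M"
  shows "f y = D"
proof -
  have s1: "(\<Sum>y\<in>V. pmf M y) = 1" by (rule sum_pmf_eq_1[OF assms(1,2)])
  have "(\<Sum>y\<in>V. pmf M y * f y) = (\<Sum>y\<in>set_pmf M. pmf M y * f y)"
    using assms(1,2) by (intro sum.mono_neutral_right) (auto simp: set_pmf_eq)
  moreover have "(\<Sum>y\<in>V. pmf M y) = (\<Sum>y\<in>set_pmf M. pmf M y)"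
    using assms(1,2) by (intro sum.mono_neutral_right) (auto simp: set_pmf_eq)
  ultimately have "(\<Sum>y\<in>set_pmf M. pmf M y * (D - f y)) \<le> 0"
    using assms(4) s1 by (simp add: right_diff_distrib sum_subtractf sum_distrib_right[symmetric])
  moreover have fin: "finite (set_pmf M)" using assms(1,2) finite_subset by blast
  moreover have "\<forall>z\<in>set_pmf M. 0 \<le> pmf M z * (D - f z)" using assms(3) by auto
  ultimately have "\<forall>z\<in>set_pmf M. pmf M z * (D - f z) = 0"
    using sum_nonneg_eq_0_iff[OF fin] by (metis (no_types, lifting) antisym sum_nonneg)
  then show ?thesis using assms(5) by (auto simp: set_pmf_eq)
qed



definition gwf :: "('v, 'b) ssg_scheme \<Rightarrow> bool" where
  "gwf X \<longleftrightarrow> finite (verts X) \<and> sinks X \<subseteq> verts X \<and> maxv X \<subseteq> verts X \<and> minv X \<subseteq> verts X \<and>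
     arcs X \<subseteq> verts X \<times> verts X \<and> maxv X \<inter> sinks X = {} \<and> minv X \<inter> sinks X = {} \<and>
     maxv X \<inter> minv X = {} \<and> (\<forall>x\<in>minv X. out X x \<noteq> {}) \<and>
     (\<forall>x\<in>verts X - sinks X - maxv X - minv X. (\<forall>y\<in>out X x. 0 < prob X x y) \<and>
          (\<Sum>y\<in>out X x. prob X x y) = 1) \<and>
     (\<forall>s\<in>sinks X. 0 \<le> sval X s)"

lemma gwfD:
  assumes "gwf X"
  shows "finite (verts X)" "sinks X \<subseteq> verts X" "maxv X \<subseteq> verts X" "minv X \<subseteq> verts X"
     "arcs X \<subseteq> verts X \<times> verts X" "maxv X \<inter> sinks X = {}" "minv X \<inter> sinks X = {}"
     "maxv X \<inter> minv X = {}" "\<forall>x\<in>minv X. out X x \<noteq> {}"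
     "\<forall>x\<in>verts X - sinks X - maxv X - minv X. (\<forall>y\<in>out X x. 0 < prob X x y) \<and>
          (\<Sum>y\<in>out X x. prob X x y) = 1"
     "\<forall>s\<in>sinks X. 0 \<le> sval X s"
  using assms unfolding gwf_def by blast+

lemma out_sub: "gwf X \<Longrightarrow> x \<in> verts X \<Longrightarrow> out X x \<subseteq> verts X"
  by (auto simp: gwf_def out_def)

lemma out_fin: "gwf X \<Longrightarrow> x \<in> verts X \<Longrightarrow> finite (out X x)"
  by (meson finite_subset gwf_def out_sub)

lemma rand_valid:
  assumes "gwf X" "x \<in> verts X - sinks X - maxv X - minv X"
  shows "(\<integral>\<^sup>+y. ennreal (if y \<in> out X x then prob X x y else 0) \<partial>count_space UNIV) = 1"
proof -
  have fin: "finite (out X x)" using out_fin[OF assms(1)] assms(2) by simp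
  note g0 = bspec[OF gwfD(10)[OF assms(1)] assms(2)]
  have g: "\<forall>y\<in>out X x. 0 < prob X x y" "(\<Sum>y\<in>out X x. prob X x y) = 1"
    using g0 by (rule conjunct1, rule conjunct2)
  have "(\<integral>\<^sup>+y. ennreal (if y \<in> out X x then prob X x y else 0) \<partial>count_space UNIV)
      = (\<integral>\<^sup>+y. ennreal (prob X x y) * indicator (out X x) y \<partial>count_space UNIV)"
    by (intro nn_integral_cong) (auto simp: indicator_def)
  also have "\<dots> = (\<integral>\<^sup>+y. ennreal (prob X x y) \<partial>count_space (out X x))"
    by (rule nn_integral_count_space_indicator[symmetric]) simp
  also have "\<dots> = (\<Sum>y\<in>out X x. ennreal (prob X x y))"
    by (rule nn_integral_count_space_finite[OF fin])
  also have "\<dots> = ennreal (\<Sum>y\<in>out X x. prob X x y)"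
    using g by (intro sum_ennreal) (auto simp: less_imp_le)
  also have "\<dots> = 1" using g by simp
  finally show ?thesis .
qed

lemma step_rand:
  assumes "gwf X" "x \<in> verts X - sinks X - maxv X - minv X"
  shows "pmf (step X \<sigma> \<tau> x) y = (if y \<in> out X x then prob X x y else 0)"
    and "set_pmf (step X \<sigma> \<tau> x) = out X x"
proof -
  note g0 = bspec[OF gwfD(10)[OF assms(1)] assms(2)]
  have nn: "\<And>y. 0 \<le> (if y \<in> out X x then prob X x y else 0)"
    using g0 by (auto simp: less_imp_le)
  have st: "step X \<sigma> \<tau> x = embed_pmf (\<lambda>y. if y \<in> out X x then prob X x y else 0)"
    using assms by (auto simp: step_def)
  show p: "pmf (step X \<sigma> \<tau> x) y = (if y \<in> out X x then prob X x y else 0)" for y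
    unfolding st by (rule pmf_embed_pmf[OF nn rand_valid[OF assms]])
  show "set_pmf (step X \<sigma> \<tau> x) = out X x"
    using g0 by (auto simp: set_pmf_eq p)
qed

lemma ES_return:
  assumes "step X \<sigma> \<tau> x = return_pmf z" "z \<in> verts X" "finite (verts X)"
  shows "ES X \<sigma> \<tau> f x = f z"
proof -
  have "ES X \<sigma> \<tau> f x = (\<Sum>y\<in>verts X. (if y = z then f y else 0))"
    unfolding ES_def assms(1) by (intro sum.cong) (auto simp: indicator_def)
  also have "\<dots> = f z" using assms(2,3) by simp
  finally show ?thesis .
qed

lemma ES_sink: "gwf X \<Longrightarrow> x \<in> sinks X \<Longrightarrow> ES X \<sigma> \<tau> f x = f x"
  by (rule ES_return) (use gwfD(1,2)[of X] in \<open>auto simp: step_def\<close>)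

lemma arc_in: "gwf X \<Longrightarrow> (x, y) \<in> arcs X \<Longrightarrow> y \<in> verts X"
  using gwfD(5)[of X] by blast

lemma ES_max: "gwf X \<Longrightarrow> is_max_strategy X \<sigma> \<Longrightarrow> x \<in> maxv X \<Longrightarrow> ES X \<sigma> \<tau> f x = f (\<sigma> x)"
  by (rule ES_return) (use gwfD(1,6)[of X] arc_in[of X x "\<sigma> x"] in \<open>auto simp: step_def is_max_strategy_def\<close>)

lemma ES_min: "gwf X \<Longrightarrow> is_min_strategy X \<tau> \<Longrightarrow> x \<in> minv X \<Longrightarrow> ES X \<sigma> \<tau> f x = f (\<tau> x)"
  by (rule ES_return) (use gwfD(1,7,8)[of X] arc_in[of X x "\<tau> x"] in \<open>auto simp: step_def is_min_strategy_def\<close>)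

lemma ES_rand:
  assumes "gwf X" "x \<in> verts X - sinks X - maxv X - minv X"
  shows "ES X \<sigma> \<tau> f x = (\<Sum>y\<in>out X x. prob X x y * f y)"
proof -
  have "ES X \<sigma> \<tau> f x = (\<Sum>y\<in>verts X. (if y \<in> out X x then prob X x y * f y else 0))"
    unfolding ES_def step_rand[OF assms] by (intro sum.cong) auto
  also have "\<dots> = (\<Sum>y\<in>out X x. prob X x y * f y)"
    using out_sub[OF assms(1)] assms gwfD(1)[OF assms(1)]
    by (subst sum.mono_neutral_right[of "verts X" "out X x"]) auto
  finally show ?thesis .
qed

lemma cwf_of:
  assumes "gwf X" "is_max_strategy X \<sigma>" "is_min_strategy X \<tau>"
  shows "cwf X \<sigma> \<tau>"
  unfolding cwf_def
proof (intro conjI ballI)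
  fix x assume x: "x \<in> verts X"
  show "set_pmf (step X \<sigma> \<tau> x) \<subseteq> verts X"
  proof (cases "x \<in> verts X - sinks X - maxv X - minv X")
    case True then show ?thesis using step_rand(2)[OF assms(1) True] out_sub[OF assms(1) x] by simp
  next
    case False then show ?thesis using assms(2,3) x arc_in[OF assms(1), of x]
      by (auto simp: step_def is_max_strategy_def is_min_strategy_def)
  qed
qed (use gwfD(1,2)[OF assms(1)] in auto)

lemma step_cong_pt:
  "(x \<in> maxv X \<Longrightarrow> \<sigma> x = \<sigma>' x) \<Longrightarrow> (x \<in> minv X \<Longrightarrow> \<tau> x = \<tau>' x) \<Longrightarrow> step X \<sigma> \<tau> x = step X \<sigma>' \<tau>' x"
  by (simp add: step_def)

lemma ES_cong_pt:
  "(x \<in> maxv X \<Longrightarrow> \<sigma> x = \<sigma>' x) \<Longrightarrow> (x \<in> minv X \<Longrightarrow> \<tau> x = \<tau>' x) \<Longrightarrow> ES X \<sigma> \<tau> f x = ES X \<sigma>' \<tau>' f x"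
  unfolding ES_def using step_cong_pt by metis

lemma pv_cong:
  assumes "\<forall>x\<in>maxv X. \<sigma> x = \<sigma>' x" "\<forall>x\<in>minv X. \<tau> x = \<tau>' x"
  shows "play_value X \<sigma> \<tau> = play_value X \<sigma>' \<tau>'"
proof -
  have st: "step X \<sigma> \<tau> = step X \<sigma>' \<tau>'" using assms by (intro ext step_cong_pt) auto
  have "state_dist X \<sigma> \<tau> n = state_dist X \<sigma>' \<tau>' n" for n
    by (induction n) (auto simp: st)
  then show ?thesis unfolding play_value_def[abs_def] reach_prob_def by simp
qed



lemma pv_nn: "gwf X \<Longrightarrow> is_max_strategy X \<sigma> \<Longrightarrow> is_min_strategy X \<tau> \<Longrightarrow> x \<in> verts X \<Longrightarrow> 0 \<le> play_value X \<sigma> \<tau> x"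
  by (rule pv_nonneg[OF cwf_of]) (use gwfD(11)[of X] in auto)

lemma mix:
  assumes X: "gwf X" and s: "is_max_strategy X \<sigma>" and t1: "is_min_strategy X \<tau>1" and t2: "is_min_strategy X \<tau>2"
  defines "\<tau>3 \<equiv> \<lambda>x. if play_value X \<sigma> \<tau>2 x < play_value X \<sigma> \<tau>1 x then \<tau>2 x else \<tau>1 x"
  shows "is_min_strategy X \<tau>3"
    and "\<forall>x\<in>verts X. play_value X \<sigma> \<tau>3 x \<le> min (play_value X \<sigma> \<tau>1 x) (play_value X \<sigma> \<tau>2 x)"
proof -
  show t3: "is_min_strategy X \<tau>3" using t1 t2 unfolding is_min_strategy_def \<tau>3_def by auto
  define p1 where "p1 = play_value X \<sigma> \<tau>1"
  define p2 where "p2 = play_value X \<sigma> \<tau>2"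
  have c1: "cwf X \<sigma> \<tau>1" and c2: "cwf X \<sigma> \<tau>2" and c3: "cwf X \<sigma> \<tau>3"
    using cwf_of X s t1 t2 t3 by blast+
  show "\<forall>x\<in>verts X. play_value X \<sigma> \<tau>3 x \<le> min (play_value X \<sigma> \<tau>1 x) (play_value X \<sigma> \<tau>2 x)"
  proof
    fix x0 assume x0: "x0 \<in> verts X"
    show "play_value X \<sigma> \<tau>3 x0 \<le> min (play_value X \<sigma> \<tau>1 x0) (play_value X \<sigma> \<tau>2 x0)"
      unfolding p1_def[symmetric] p2_def[symmetric]
    proof (rule pv_le[OF c3, where v = "\<lambda>x. min (p1 x) (p2 x)"])
      show "\<forall>x\<in>verts X. 0 \<le> min (p1 x) (p2 x)" unfolding p1_def p2_def using pv_nn X s t1 t2 by auto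
      show "\<forall>s\<in>sinks X. sval X s \<le> min (p1 s) (p2 s)" unfolding p1_def p2_def
        using pv_sink[OF c1] pv_sink[OF c2] by auto
      show "x0 \<in> verts X" by fact
      show "\<forall>x\<in>verts X - sinks X. ES X \<sigma> \<tau>3 (\<lambda>x. min (p1 x) (p2 x)) x \<le> min (p1 x) (p2 x)"
      proof
        fix x assume x: "x \<in> verts X - sinks X"
        have a: "ES X \<sigma> \<tau>3 (\<lambda>x. min (p1 x) (p2 x)) x \<le> ES X \<sigma> \<tau>3 p1 x" by (rule ES_mono) auto
        have b: "ES X \<sigma> \<tau>3 (\<lambda>x. min (p1 x) (p2 x)) x \<le> ES X \<sigma> \<tau>3 p2 x" by (rule ES_mono) auto
        have f1: "ES X \<sigma> \<tau>1 p1 x = p1 x" unfolding p1_def using pv_fix[OF c1] x by auto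
        have f2: "ES X \<sigma> \<tau>2 p2 x = p2 x" unfolding p2_def using pv_fix[OF c2] x by auto
        show "ES X \<sigma> \<tau>3 (\<lambda>x. min (p1 x) (p2 x)) x \<le> min (p1 x) (p2 x)"
        proof (cases "x \<in> minv X")
          case True
          show ?thesis
          proof (cases "p2 x < p1 x")
            case True
            then have "ES X \<sigma> \<tau>3 p2 x = ES X \<sigma> \<tau>2 p2 x" by (intro ES_cong_pt) (auto simp: \<tau>3_def p1_def p2_def)
            then show ?thesis using b f2 True by auto
          next
            case False
            then have "ES X \<sigma> \<tau>3 p1 x = ES X \<sigma> \<tau>1 p1 x" by (intro ES_cong_pt) (auto simp: \<tau>3_def p1_def p2_def)
            then show ?thesis using a f1 False by auto
          qed
        next
          case False
          then have "ES X \<sigma> \<tau>3 p1 x = ES X \<sigma> \<tau>1 p1 x" "ES X \<sigma> \<tau>3 p2 x = ES X \<sigma> \<tau>2 p2 x"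
            by (auto intro: ES_cong_pt)
          then show ?thesis using a b f1 f2 by auto
        qed
      qed
    qed
  qed
qed

lemma bm:
  assumes X: "gwf X" and s: "is_max_strategy X \<sigma>" and br: "is_best_response X \<sigma> \<tau>"
    and x: "x \<in> minv X" and xy: "(x, y) \<in> arcs X"
  shows "play_value X \<sigma> \<tau> x \<le> play_value X \<sigma> \<tau> y"
proof (rule ccontr)
  assume "\<not> ?thesis"
  then have lt: "play_value X \<sigma> \<tau> y < play_value X \<sigma> \<tau> x" by simp
  then have yx: "y \<noteq> x" by auto
  have t: "is_min_strategy X \<tau>" using br by (simp add: is_best_response_def)
  define \<tau>' where "\<tau>' = \<tau>(x := y)"
  have t': "is_min_strategy X \<tau>'" using t xy unfolding is_min_strategy_def \<tau>'_def by auto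
  define w where "w = play_value X \<sigma> \<tau>"
  define v where "v = w(x := w y)"
  have c: "cwf X \<sigma> \<tau>" and c': "cwf X \<sigma> \<tau>'" using cwf_of X s t t' by blast+
  have xV: "x \<in> verts X" using gwfD(4)[OF X] x by blast
  have yV: "y \<in> verts X" using arc_in[OF X xy] .
  have xS: "x \<notin> sinks X" using gwfD(7)[OF X] x by blast
  have "play_value X \<sigma> \<tau>' x \<le> v x"
  proof (rule pv_le[OF c'])
    show "\<forall>z\<in>verts X. 0 \<le> v z" unfolding v_def w_def using pv_nn[OF X s t] yV by auto
    show "\<forall>s\<in>sinks X. sval X s \<le> v s" unfolding v_def w_def using pv_sink[OF c] xS by auto
    show "x \<in> verts X" by fact
    show "\<forall>z\<in>verts X - sinks X. ES X \<sigma> \<tau>' v z \<le> v z"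
    proof
      fix z assume z: "z \<in> verts X - sinks X"
      show "ES X \<sigma> \<tau>' v z \<le> v z"
      proof (cases "z = x")
        case True
        then show ?thesis using ES_min[OF X t' x] yx by (simp add: \<tau>'_def v_def)
      next
        case False
        have "ES X \<sigma> \<tau>' v z \<le> ES X \<sigma> \<tau>' w z" by (rule ES_mono) (use lt in \<open>auto simp: v_def w_def\<close>)
        also have "\<dots> = ES X \<sigma> \<tau> w z" using False by (intro ES_cong_pt) (auto simp: \<tau>'_def)
        also have "\<dots> = w z" unfolding w_def using pv_fix[OF c] z by auto
        finally show ?thesis using False by (simp add: v_def)
      qed
    qed
  qed
  moreover have "play_value X \<sigma> \<tau> x \<le> play_value X \<sigma> \<tau>' x"
    using br t' xV by (auto simp: is_best_response_def)
  ultimately show False using lt by (simp add: v_def w_def)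
qed

lemma ex_br:
  assumes X: "gwf X" and s: "is_max_strategy X \<sigma>"
  shows "\<exists>\<tau>. is_best_response X \<sigma> \<tau>"
proof -
  define T where "T = {\<tau> \<in> minv X \<rightarrow>\<^sub>E verts X. is_min_strategy X \<tau>}"
  have "T \<subseteq> minv X \<rightarrow>\<^sub>E verts X" unfolding T_def by blast
  moreover have "finite (minv X \<rightarrow>\<^sub>E verts X)"
    using gwfD(1,4)[OF X] by (intro finite_PiE) (auto intro: finite_subset)
  ultimately have finT: "finite T" by (rule finite_subset)
  define \<tau>0 where "\<tau>0 = restrict (\<lambda>x. SOME y. y \<in> out X x) (minv X)"
  have "is_min_strategy X \<tau>0" unfolding is_min_strategy_def \<tau>0_def
  proof
    fix x assume "x \<in> minv X"
    then have "out X x \<noteq> {}" using gwfD(9)[OF X] by blast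
    then have "(SOME y. y \<in> out X x) \<in> out X x" by (simp add: some_in_eq)
    then show "(x, restrict (\<lambda>x. SOME y. y \<in> out X x) (minv X) x) \<in> arcs X"
      using \<open>x \<in> minv X\<close> by (simp add: out_def)
  qed
  then have "\<tau>0 \<in> T" unfolding T_def using arc_in[OF X] by (auto simp: \<tau>0_def is_min_strategy_def)
  define F where "F = (\<lambda>\<tau>. \<Sum>x\<in>verts X. play_value X \<sigma> \<tau> x)"
  have "Min (F ` T) \<in> F ` T" using finT \<open>\<tau>0 \<in> T\<close> by (intro Min_in) auto
  then obtain \<tau>1 where t1T: "\<tau>1 \<in> T" and F1: "F \<tau>1 = Min (F ` T)" by auto
  have t1: "is_min_strategy X \<tau>1" using t1T by (simp add: T_def)
  have "is_best_response X \<sigma> \<tau>1" unfolding is_best_response_def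
  proof (intro conjI allI impI ballI t1)
    fix \<tau>2 x0 assume t2: "is_min_strategy X \<tau>2" and x0: "x0 \<in> verts X"
    show "play_value X \<sigma> \<tau>1 x0 \<le> play_value X \<sigma> \<tau>2 x0"
    proof (rule ccontr)
    assume "\<not> play_value X \<sigma> \<tau>1 x0 \<le> play_value X \<sigma> \<tau>2 x0"
    then have lt: "play_value X \<sigma> \<tau>2 x0 < play_value X \<sigma> \<tau>1 x0" by simp
    define \<tau>3 where "\<tau>3 = (\<lambda>x. if play_value X \<sigma> \<tau>2 x < play_value X \<sigma> \<tau>1 x then \<tau>2 x else \<tau>1 x)"
    have t3: "is_min_strategy X \<tau>3" and le3: "\<forall>x\<in>verts X. play_value X \<sigma> \<tau>3 x \<le> min (play_value X \<sigma> \<tau>1 x) (play_value X \<sigma> \<tau>2 x)"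
      using mix[OF X s t1 t2] unfolding \<tau>3_def by blast+
    define \<tau>4 where "\<tau>4 = restrict \<tau>3 (minv X)"
    have t4: "is_min_strategy X \<tau>4" using t3 by (simp add: is_min_strategy_def \<tau>4_def)
    have "\<tau>4 \<in> T" unfolding T_def using t4 arc_in[OF X] by (auto simp: \<tau>4_def is_min_strategy_def)
    have pv4: "play_value X \<sigma> \<tau>4 = play_value X \<sigma> \<tau>3" by (rule pv_cong) (auto simp: \<tau>4_def)
    have "F \<tau>4 < F \<tau>1" unfolding F_def pv4
      using gwfD(1)[OF X] le3 x0 lt by (intro sum_strict_mono_ex1) force+
    moreover have "Min (F ` T) \<le> F \<tau>4" using finT \<open>\<tau>4 \<in> T\<close> by (intro Min_le) auto
    ultimately show False using F1 by simp
  qed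
  qed
  then show ?thesis by blast
qed

lemma br_some:
  assumes "gwf X" "is_max_strategy X \<sigma>"
  shows "is_best_response X \<sigma> (SOME \<tau>. is_best_response X \<sigma> \<tau>)"
  using ex_br[OF assms] by (rule someI_ex)



lemma ssgD:
  assumes "ssg G"
  shows "finite (verts G)" "maxv G \<union> minv G \<union> randv G \<union> sinks G = verts G"
    "maxv G \<inter> minv G = {}" "maxv G \<inter> randv G = {}" "maxv G \<inter> sinks G = {}"
    "minv G \<inter> randv G = {}" "minv G \<inter> sinks G = {}" "randv G \<inter> sinks G = {}"
    "arcs G \<subseteq> verts G \<times> verts G"
    "\<forall>x \<in> verts G - sinks G. out G x \<noteq> {}"
    "\<forall>x \<in> randv G. (\<forall>y \<in> out G x. prob G x y > 0) \<and> (\<Sum>y \<in> out G x. prob G x y) = 1"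
    "\<forall>s \<in> sinks G. 0 \<le> sval G s"
  using assms by (simp_all add: ssg_def)

lemma ssg_rand: "ssg G \<Longrightarrow> x \<in> verts G - sinks G - maxv G - minv G \<Longrightarrow> x \<in> randv G"
  using ssgD(2)[of G] by blast

lemma gwf_G: assumes "ssg G" shows "gwf G"
  unfolding gwf_def
proof (intro conjI)
  show "\<forall>x\<in>verts G - sinks G - maxv G - minv G. (\<forall>y\<in>out G x. 0 < prob G x y) \<and> (\<Sum>y\<in>out G x. prob G x y) = 1"
    using ssgD(11)[OF assms] ssg_rand[OF assms] by blast
  show "\<forall>x\<in>minv G. out G x \<noteq> {}" using ssgD(2,7,10)[OF assms] by blast
  show "finite (verts G)" using ssgD(1)[OF assms] .
  show "arcs G \<subseteq> verts G \<times> verts G" using ssgD(9)[OF assms] .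
  show "\<forall>s\<in>sinks G. 0 \<le> sval G s" using ssgD(12)[OF assms] .
  show "maxv G \<inter> sinks G = {}" using ssgD(5)[OF assms] .
  show "minv G \<inter> sinks G = {}" using ssgD(7)[OF assms] .
  show "maxv G \<inter> minv G = {}" using ssgD(3)[OF assms] .
  show "sinks G \<subseteq> verts G" using ssgD(2)[OF assms] by blast
  show "maxv G \<subseteq> verts G" using ssgD(2)[OF assms] by blast
  show "minv G \<subseteq> verts G" using ssgD(2)[OF assms] by blast
qed

definition ed :: "('v \<times> 'v) set \<Rightarrow> 'v \<Rightarrow> 'v \<Rightarrow> 'v + 'v \<times> 'v" where
  "ed A x y = (if (x, y) \<in> A then Inr (x, y) else Inl y)"

lemma ed_inj: "ed A x y = ed A x y' \<Longrightarrow> y = y'"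
  by (auto simp: ed_def split: if_splits)

lemma lift_Inl[simp]: "lift_strategy A \<tau> (Inl x) = ed A x (\<tau> x)"
  by (simp add: lift_strategy_def ed_def)

lemma tr_simps[simp]:
  "verts (transform G A \<sigma>) = Inl ` verts G \<union> Inr ` A"
  "maxv (transform G A \<sigma>) = Inl ` maxv G"
  "minv (transform G A \<sigma>) = Inl ` minv G"
  "randv (transform G A \<sigma>) = Inl ` randv G"
  "sinks (transform G A \<sigma>) = Inl ` sinks G \<union> Inr ` A"
  "sval (transform G A \<sigma>) (Inl s) = sval G s"
  "sval (transform G A \<sigma>) (Inr (x, y)) = max_value G \<sigma> y"
  "prob (transform G A \<sigma>) (Inl x) (ed A x y) = prob G x y"
  by (auto simp: transform_def ed_def)

lemma tr_arcs: "arcs (transform G A \<sigma>) = {(Inl x, Inl y) | x y. (x, y) \<in> arcs G - A}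
          \<union> {(Inl x, Inr (x, y)) | x y. (x, y) \<in> A}
          \<union> {(Inr e, Inr e) | e. e \<in> A}"
  by (simp add: transform_def)

lemma tr_out: "A \<subseteq> arcs G \<Longrightarrow> out (transform G A \<sigma>) (Inl x) = ed A x ` out G x"
  unfolding out_def tr_arcs ed_def by (auto split: if_splits)

lemma tr_arc_ed: "A \<subseteq> arcs G \<Longrightarrow> (x, y) \<in> arcs G \<Longrightarrow> (Inl x, ed A x y) \<in> arcs (transform G A \<sigma>)"
  unfolding tr_arcs ed_def by auto

lemma gwf_H:
  assumes G: "ssg G" and A: "A \<subseteq> arcs G" and nn: "\<forall>y\<in>verts G. 0 \<le> max_value G \<sigma> y"
  shows "gwf (transform G A \<sigma>)"
proof -
  let ?H = "transform G A \<sigma>"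
  have AV: "A \<subseteq> verts G \<times> verts G" using A ssgD(9)[OF G] by blast
  have r: "(\<forall>y\<in>out ?H z. 0 < prob ?H z y) \<and> (\<Sum>y\<in>out ?H z. prob ?H z y) = 1"
    if z: "z \<in> verts ?H - sinks ?H - maxv ?H - minv ?H" for z
  proof -
    obtain x where zx: "z = Inl x" and x: "x \<in> verts G - sinks G - maxv G - minv G" using z by (auto simp: image_iff) blast
    have xr: "x \<in> randv G" using ssg_rand[OF G x] .
    have o: "out ?H z = ed A x ` out G x" using tr_out[OF A] zx by simp
    have inj: "inj_on (ed A x) (out G x)" by (auto intro: inj_onI ed_inj)
    have "(\<Sum>y\<in>out ?H z. prob ?H z y) = (\<Sum>y\<in>out G x. prob ?H (Inl x) (ed A x y))"
      unfolding o zx using sum.reindex[OF inj, of "prob ?H (Inl x)"] by (simp add: comp_def o[unfolded zx] zx)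
    also have "\<dots> = (\<Sum>y\<in>out G x. prob G x y)" by simp
    also have "\<dots> = 1" using ssgD(11)[OF G] xr by blast
    finally show ?thesis using ssgD(11)[OF G] xr o zx by auto
  qed
  show ?thesis unfolding gwf_def
  proof (intro conjI)
    have "finite A" using ssgD(1)[OF G] AV finite_subset by blast
    then show "finite (verts ?H)" using ssgD(1)[OF G] by auto
    show "arcs ?H \<subseteq> verts ?H \<times> verts ?H" unfolding tr_arcs using ssgD(9)[OF G] A by fastforce
    show "\<forall>x\<in>minv ?H. out ?H x \<noteq> {}" using ssgD(2,7,10)[OF G] tr_out[OF A] by fastforce
    show "\<forall>s\<in>sinks ?H. 0 \<le> sval ?H s" using ssgD(12)[OF G] nn AV by auto
    show "\<forall>x\<in>verts ?H - sinks ?H - maxv ?H - minv ?H. (\<forall>y\<in>out ?H x. 0 < prob ?H x y) \<and> (\<Sum>y\<in>out ?H x. prob ?H x y) = 1"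
      using r by blast
    show "sinks ?H \<subseteq> verts ?H" using ssgD(2)[OF G] by auto
    show "maxv ?H \<subseteq> verts ?H" using ssgD(2)[OF G] by auto
    show "minv ?H \<subseteq> verts ?H" using ssgD(2)[OF G] by auto
    show "maxv ?H \<inter> sinks ?H = {}" using ssgD(5)[OF G] by auto
    show "minv ?H \<inter> sinks ?H = {}" using ssgD(7)[OF G] by auto
    show "maxv ?H \<inter> minv ?H = {}" using ssgD(3)[OF G] by auto
  qed
qed

lemma tr_max: "A \<subseteq> arcs G \<Longrightarrow> is_max_strategy G \<sigma>1 \<Longrightarrow> is_max_strategy (transform G A \<sigma>) (lift_strategy A \<sigma>1)"
  unfolding is_max_strategy_def by (auto intro!: tr_arc_ed)

lemma tr_min: "A \<subseteq> arcs G \<Longrightarrow> is_min_strategy G \<tau>1 \<Longrightarrow> is_min_strategy (transform G A \<sigma>) (lift_strategy A \<tau>1)"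
  unfolding is_min_strategy_def by (auto intro!: tr_arc_ed)



lemma Inl_img[simp]: "Inl x \<in> Inl ` S \<longleftrightarrow> x \<in> S" by auto
lemma Inl_Inr_img[simp]: "Inl x \<notin> Inr ` S" by auto

lemma TR:
  assumes G: "ssg G" and A: "A \<subseteq> arcs G" and H: "gwf (transform G A \<sigma>)"
    and s1: "is_max_strategy G \<sigma>1" and t1: "is_min_strategy G \<tau>1" and x: "x \<in> verts G - sinks G"
  shows "ES (transform G A \<sigma>) (lift_strategy A \<sigma>1) (lift_strategy A \<tau>1) h (Inl x)
       = ES G \<sigma>1 \<tau>1 (\<lambda>y. h (ed A x y)) x"
proof -
  let ?H = "transform G A \<sigma>"
  have gG: "gwf G" using gwf_G[OF G] .
  have sH: "is_max_strategy ?H (lift_strategy A \<sigma>1)" using tr_max[OF A s1] .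
  have tH: "is_min_strategy ?H (lift_strategy A \<tau>1)" using tr_min[OF A t1] .
  show ?thesis
  proof (cases "x \<in> maxv G")
    case True
    then show ?thesis using ES_max[OF H sH, of "Inl x"] ES_max[OF gG s1 True] by simp
  next
    case nm: False
    show ?thesis
    proof (cases "x \<in> minv G")
      case True
      then show ?thesis using ES_min[OF H tH, of "Inl x"] ES_min[OF gG t1 True] by simp
    next
      case False
      then have xr: "x \<in> verts G - sinks G - maxv G - minv G" using x nm by blast
      have xrH: "Inl x \<in> verts ?H - sinks ?H - maxv ?H - minv ?H" using xr by simp
      have inj: "inj_on (ed A x) (out G x)" by (auto intro: inj_onI ed_inj)
      have "ES ?H (lift_strategy A \<sigma>1) (lift_strategy A \<tau>1) h (Inl x)
          = (\<Sum>z\<in>out ?H (Inl x). prob ?H (Inl x) z * h z)" by (rule ES_rand[OF H xrH])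
      also have "\<dots> = (\<Sum>y\<in>out G x. prob ?H (Inl x) (ed A x y) * h (ed A x y))"
        unfolding tr_out[OF A] using sum.reindex[OF inj, of "\<lambda>z. prob ?H (Inl x) z * h z"] by (simp add: comp_def)
      also have "\<dots> = (\<Sum>y\<in>out G x. prob G x y * h (ed A x y))" by simp
      also have "\<dots> = ES G \<sigma>1 \<tau>1 (\<lambda>y. h (ed A x y)) x" by (rule ES_rand[OF gG xr, symmetric])
      finally show ?thesis .
    qed
  qed
qed

lemma TR_supp:
  assumes G: "ssg G" and A: "A \<subseteq> arcs G" and H: "gwf (transform G A \<sigma>)"
    and x: "x \<in> verts G - sinks G"
  shows "set_pmf (step (transform G A \<sigma>) (lift_strategy A \<sigma>1) (lift_strategy A \<tau>1) (Inl x))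
       = ed A x ` set_pmf (step G \<sigma>1 \<tau>1 x)"
proof -
  let ?H = "transform G A \<sigma>"
  have gG: "gwf G" using gwf_G[OF G] .
  show ?thesis
  proof (cases "x \<in> verts G - sinks G - maxv G - minv G")
    case True
    have xrH: "Inl x \<in> verts ?H - sinks ?H - maxv ?H - minv ?H" using True by simp
    show ?thesis unfolding step_rand(2)[OF H xrH] step_rand(2)[OF gG True] tr_out[OF A] ..
  next
    case False
    then show ?thesis using x by (auto simp: step_def)
  qed
qed

lemma conv:
  assumes A: "A \<subseteq> arcs G" and t: "is_min_strategy (transform G A \<sigma>) \<tau>'"
  defines "\<tau>g \<equiv> (\<lambda>x. case \<tau>' (Inl x) of Inl y \<Rightarrow> y | Inr e \<Rightarrow> snd e)"
  shows "is_min_strategy G \<tau>g" "\<forall>z\<in>minv (transform G A \<sigma>). lift_strategy A \<tau>g z = \<tau>' z"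
proof -
  have *: "(x, \<tau>g x) \<in> arcs G \<and> ed A x (\<tau>g x) = \<tau>' (Inl x)" if x: "x \<in> minv G" for x
  proof -
    have "(Inl x, \<tau>' (Inl x)) \<in> arcs (transform G A \<sigma>)" using t x by (auto simp: is_min_strategy_def)
    then show ?thesis unfolding tr_arcs \<tau>g_def ed_def using A by auto
  qed
  show "is_min_strategy G \<tau>g" using * by (auto simp: is_min_strategy_def)
  show "\<forall>z\<in>minv (transform G A \<sigma>). lift_strategy A \<tau>g z = \<tau>' z" using * by auto
qed

lemma br_lift:
  assumes A: "A \<subseteq> arcs G" and H: "gwf (transform G A \<sigma>)"
    and s1: "is_max_strategy (transform G A \<sigma>) \<sigma>1"
  shows "\<exists>\<tau>g. is_min_strategy G \<tau>g \<and> is_best_response (transform G A \<sigma>) \<sigma>1 (lift_strategy A \<tau>g)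
      \<and> play_value (transform G A \<sigma>) \<sigma>1 (lift_strategy A \<tau>g) = max_value (transform G A \<sigma>) \<sigma>1"
proof -
  let ?H = "transform G A \<sigma>"
  let ?t = "SOME \<tau>. is_best_response ?H \<sigma>1 \<tau>"
  have br: "is_best_response ?H \<sigma>1 ?t" using br_some[OF H s1] .
  then have t: "is_min_strategy ?H ?t" by (simp add: is_best_response_def)
  define \<tau>g where "\<tau>g = (\<lambda>x. case ?t (Inl x) of Inl y \<Rightarrow> y | Inr e \<Rightarrow> snd e)"
  have tg: "is_min_strategy G \<tau>g" and eq: "\<forall>z\<in>minv ?H. lift_strategy A \<tau>g z = ?t z"
    using conv[OF A t] unfolding \<tau>g_def by blast+
  have pv: "play_value ?H \<sigma>1 (lift_strategy A \<tau>g) = play_value ?H \<sigma>1 ?t"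
    by (rule pv_cong) (use eq in auto)
  have "is_best_response ?H \<sigma>1 (lift_strategy A \<tau>g)"
    using br tr_min[OF A tg] unfolding is_best_response_def pv by blast
  moreover have "max_value ?H \<sigma>1 = play_value ?H \<sigma>1 ?t" by (rule ext) (simp add: max_value_def)
  ultimately show ?thesis using tg pv by metis
qed



theorem proposition18:
  fixes G :: "'v ssg" and A :: "('v \<times> 'v) set" and \<sigma> \<sigma>' :: "'v \<Rightarrow> 'v"
  assumes "ssg G"
    and "A \<subseteq> arcs G"
    and "is_max_strategy G \<sigma>"
    and "is_max_strategy G \<sigma>'"
    and "strat_succ (transform G A \<sigma>) (Inl ` verts G) (lift_strategy A \<sigma>') (lift_strategy A \<sigma>)"
  shows "strat_gt G (verts G) \<sigma>' \<sigma>"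
proof -
  note G = assms(1) and A = assms(2) and s = assms(3) and s' = assms(4) and succ = assms(5)
  have gG: "gwf G" using gwf_G[OF G] .
  define V where "V = verts G"
  define \<tau>a where "\<tau>a = (SOME \<tau>. is_best_response G \<sigma> \<tau>)"
  have bra: "is_best_response G \<sigma> \<tau>a" unfolding \<tau>a_def by (rule br_some[OF gG s])
  have ta: "is_min_strategy G \<tau>a" using bra by (simp add: is_best_response_def)
  define u where "u = play_value G \<sigma> \<tau>a"
  have mvu: "max_value G \<sigma> = u" unfolding u_def \<tau>a_def by (rule ext) (simp add: max_value_def)
  define \<tau>b where "\<tau>b = (SOME \<tau>. is_best_response G \<sigma>' \<tau>)"
  have brb: "is_best_response G \<sigma>' \<tau>b" unfolding \<tau>b_def by (rule br_some[OF gG s'])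
  have tb: "is_min_strategy G \<tau>b" using brb by (simp add: is_best_response_def)
  define g where "g = play_value G \<sigma>' \<tau>b"
  have mvg: "max_value G \<sigma>' = g" unfolding g_def \<tau>b_def by (rule ext) (simp add: max_value_def)
  have cA: "cwf G \<sigma> \<tau>a" and cB: "cwf G \<sigma>' \<tau>b" using cwf_of gG s s' ta tb by blast+
  have u_nn: "\<forall>y\<in>V. 0 \<le> u y" unfolding u_def V_def using pv_nn[OF gG s ta] by blast
  have g_nn: "\<forall>y\<in>V. 0 \<le> g y" unfolding g_def V_def using pv_nn[OF gG s' tb] by blast
  define H where "H = transform G A \<sigma>"
  define L where "L = lift_strategy A"
  have gH: "gwf H" unfolding H_def by (rule gwf_H[OF G A]) (use u_nn mvu V_def in simp)
  have sH: "is_max_strategy H (L \<sigma>)" and sH': "is_max_strategy H (L \<sigma>')"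
    unfolding H_def L_def using tr_max[OF A s] tr_max[OF A s'] by blast+
  obtain \<tau>c where tc: "is_min_strategy G \<tau>c" and brc: "is_best_response H (L \<sigma>) (L \<tau>c)"
    and mvuH: "play_value H (L \<sigma>) (L \<tau>c) = max_value H (L \<sigma>)"
    using br_lift[OF A gH[unfolded H_def] sH[unfolded H_def]] unfolding H_def L_def by blast
  obtain \<tau>d where td: "is_min_strategy G \<tau>d" and brd: "is_best_response H (L \<sigma>') (L \<tau>d)"
    and mvwH: "play_value H (L \<sigma>') (L \<tau>d) = max_value H (L \<sigma>')"
    using br_lift[OF A gH[unfolded H_def] sH'[unfolded H_def]] unfolding H_def L_def by blast
  define uH where "uH = play_value H (L \<sigma>) (L \<tau>c)"
  define wH where "wH = play_value H (L \<sigma>') (L \<tau>d)"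
  have tcH: "is_min_strategy H (L \<tau>c)" and tdH: "is_min_strategy H (L \<tau>d)" and tbH: "is_min_strategy H (L \<tau>b)"
    unfolding H_def L_def using tr_min[OF A tc] tr_min[OF A td] tr_min[OF A tb] by blast+
  have cC: "cwf H (L \<sigma>) (L \<tau>c)" and cD: "cwf H (L \<sigma>') (L \<tau>d)" and cE: "cwf H (L \<sigma>') (L \<tau>b)"
    using cwf_of gH sH sH' tcH tdH tbH by blast+
  have LInl: "\<And>f x. L f (Inl x) = ed A x (f x)" unfolding L_def by simp
  have le1: "\<forall>x\<in>V. uH (Inl x) \<le> wH (Inl x)" and ex1: "\<exists>x\<in>V. uH (Inl x) \<noteq> wH (Inl x)"
    and eqs: "\<forall>x\<in>maxv G. wH (Inl x) = uH (Inl x) \<longrightarrow> \<sigma>' x = \<sigma> x"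
  proof -
    have su: "strat_succ H (Inl ` V) (L \<sigma>') (L \<sigma>)" using succ unfolding H_def L_def V_def .
    have mu: "max_value H (L \<sigma>) = uH" unfolding uH_def using mvuH by simp
    have mw: "max_value H (L \<sigma>') = wH" unfolding wH_def using mvwH by simp
    show "\<forall>x\<in>V. uH (Inl x) \<le> wH (Inl x)" using su unfolding strat_succ_def strat_gt_def mu mw by blast
    show "\<exists>x\<in>V. uH (Inl x) \<noteq> wH (Inl x)" using su unfolding strat_succ_def strat_gt_def mu mw by blast
    show "\<forall>x\<in>maxv G. wH (Inl x) = uH (Inl x) \<longrightarrow> \<sigma>' x = \<sigma> x"
    proof (intro ballI impI)
      fix x assume "x \<in> maxv G" "wH (Inl x) = uH (Inl x)"
      moreover have "Inl x \<in> maxv H" using \<open>x \<in> maxv G\<close> unfolding H_def by simp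
      ultimately have "L \<sigma>' (Inl x) = L \<sigma> (Inl x)" using su unfolding strat_succ_def mu mw by auto
      then show "\<sigma>' x = \<sigma> x" unfolding LInl by (rule ed_inj)
    qed
  qed
  have ArcV: "\<And>x y. (x, y) \<in> arcs G \<Longrightarrow> x \<in> V \<and> y \<in> V" using ssgD(9)[OF G] unfolding V_def by blast
  have sinkA: "\<And>x y. (x, y) \<in> A \<Longrightarrow> Inr (x, y) \<in> sinks H" unfolding H_def by simp
  have uHr: "uH (Inr (x, y)) = u y" if "(x, y) \<in> A" for x y
    using pv_sink[OF cC sinkA[OF that]] mvu unfolding uH_def H_def by simp
  have wHr: "wH (Inr (x, y)) = u y" if "(x, y) \<in> A" for x y
    using pv_sink[OF cD sinkA[OF that]] mvu unfolding wH_def H_def by simp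
  have sinkS: "\<And>s. s \<in> sinks G \<Longrightarrow> Inl s \<in> sinks H" unfolding H_def by simp
  have uHs: "uH (Inl s) = sval G s" if "s \<in> sinks G" for s
    using pv_sink[OF cC sinkS[OF that]] unfolding uH_def H_def by simp
  have wHs: "wH (Inl s) = sval G s" if "s \<in> sinks G" for s
    using pv_sink[OF cD sinkS[OF that]] unfolding wH_def H_def by simp
  have InlV: "\<And>x. x \<in> V \<Longrightarrow> Inl x \<in> verts H" unfolding H_def V_def by simp
  have TR': "\<And>\<sigma>1 \<tau>1 h x. is_max_strategy G \<sigma>1 \<Longrightarrow> is_min_strategy G \<tau>1 \<Longrightarrow> x \<in> V - sinks G \<Longrightarrow>
     ES H (L \<sigma>1) (L \<tau>1) h (Inl x) = ES G \<sigma>1 \<tau>1 (\<lambda>y. h (ed A x y)) x"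
    unfolding H_def L_def V_def by (rule TR[OF G A gH[unfolded H_def]])
  have uu: "\<forall>x\<in>V. u x \<le> uH (Inl x)"
  proof
    fix x0 assume x0: "x0 \<in> V"
    define \<tau>m where "\<tau>m = (\<lambda>x. if u x \<le> uH (Inl x) then \<tau>a x else \<tau>c x)"
    have tm: "is_min_strategy G \<tau>m" using ta tc unfolding is_min_strategy_def \<tau>m_def by auto
    have cM: "cwf G \<sigma> \<tau>m" using cwf_of[OF gG s tm] .
    define v where "v = (\<lambda>x. min (u x) (uH (Inl x)))"
    have "play_value G \<sigma> \<tau>m x0 \<le> v x0"
    proof (rule pv_le[OF cM])
      show "x0 \<in> verts G" using x0 V_def by simp
      show "\<forall>x\<in>verts G. 0 \<le> v x" unfolding v_def uH_def
        using u_nn pv_nn[OF gH sH tcH] InlV V_def by auto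
      show "\<forall>s\<in>sinks G. sval G s \<le> v s" unfolding v_def u_def using pv_sink[OF cA] uHs by simp
      show "\<forall>x\<in>verts G - sinks G. ES G \<sigma> \<tau>m v x \<le> v x"
      proof
        fix x assume x: "x \<in> verts G - sinks G"
        have a: "ES G \<sigma> \<tau>m v x \<le> ES G \<sigma> \<tau>m u x" by (rule ES_mono) (simp add: v_def)
        have b: "ES G \<sigma> \<tau>m v x \<le> ES G \<sigma> \<tau>m (\<lambda>y. uH (ed A x y)) x"
          by (rule ES_mono) (auto simp: v_def ed_def uHr)
        have fa: "ES G \<sigma> \<tau>a u x = u x" unfolding u_def using pv_fix[OF cA] x by simp
        have fc: "ES G \<sigma> \<tau>c (\<lambda>y. uH (ed A x y)) x = uH (Inl x)"
          using TR'[OF s tc, of x uH] pv_fix[OF cC InlV, of x] x unfolding uH_def V_def by simp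
        show "ES G \<sigma> \<tau>m v x \<le> v x"
        proof (cases "x \<in> minv G")
          case True
          show ?thesis
          proof (cases "u x \<le> uH (Inl x)")
            case True
            then have "ES G \<sigma> \<tau>m u x = ES G \<sigma> \<tau>a u x" by (intro ES_cong_pt) (auto simp: \<tau>m_def)
            then show ?thesis using a fa True by (simp add: v_def)
          next
            case False
            then have "ES G \<sigma> \<tau>m (\<lambda>y. uH (ed A x y)) x = ES G \<sigma> \<tau>c (\<lambda>y. uH (ed A x y)) x"
              by (intro ES_cong_pt) (auto simp: \<tau>m_def)
            then show ?thesis using b fc False by (simp add: v_def)
          qed
        next
          case False
          then have "ES G \<sigma> \<tau>m u x = ES G \<sigma> \<tau>a u x"
            "ES G \<sigma> \<tau>m (\<lambda>y. uH (ed A x y)) x = ES G \<sigma> \<tau>c (\<lambda>y. uH (ed A x y)) x"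
            by (auto intro: ES_cong_pt)
          then show ?thesis using a b fa fc by (simp add: v_def)
        qed
      qed
    qed
    moreover have "u x0 \<le> play_value G \<sigma> \<tau>m x0" using bra tm x0 unfolding u_def V_def is_best_response_def by blast
    ultimately show "u x0 \<le> uH (Inl x0)" by (simp add: v_def)
  qed
  have main: "\<forall>x\<in>V. wH (Inl x) \<le> g x"
  proof (rule ccontr)
    assume "\<not> ?thesis"
    then obtain x0 where x0: "x0 \<in> V" "g x0 < wH (Inl x0)" by force
    define d where "d = (\<lambda>x. wH (Inl x) - g x)"
    define D where "D = Max (d ` V)"
    have finV: "finite V" using gG gwfD(1) V_def by blast
    have dle: "\<forall>x\<in>V. d x \<le> D" unfolding D_def using finV by auto
    have Dpos: "0 < D" using dle x0 by (force simp: d_def)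
    define S where "S = {x\<in>V. d x = D}"
    have "D \<in> d ` V" unfolding D_def using finV x0 by (intro Max_in) auto
    then obtain x1 where x1: "x1 \<in> S" unfolding S_def by auto
    have F1: "wH (Inl x) \<le> ES G \<sigma>' \<tau>b (\<lambda>y. wH (ed A x y)) x" if x: "x \<in> V - sinks G" for x
    proof (cases "x \<in> minv G")
      case True
      have arc: "(x, \<tau>b x) \<in> arcs G" using tb True by (simp add: is_min_strategy_def)
      have "wH (Inl x) \<le> wH (ed A x (\<tau>b x))" unfolding wH_def
        by (rule bm[OF gH sH' brd]) (use True tr_arc_ed[OF A arc] in \<open>auto simp: H_def\<close>)
      then show ?thesis using ES_min[OF gG tb True] by simp
    next
      case False
      have "wH (Inl x) = ES H (L \<sigma>') (L \<tau>d) wH (Inl x)" unfolding wH_def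
        using pv_fix[OF cD InlV] x by simp
      also have "\<dots> = ES H (L \<sigma>') (L \<tau>b) wH (Inl x)"
        by (rule ES_cong_pt) (use False in \<open>auto simp: H_def\<close>)
      also have "\<dots> = ES G \<sigma>' \<tau>b (\<lambda>y. wH (ed A x y)) x" by (rule TR'[OF s' tb x])
      finally show ?thesis by simp
    qed
    have F2: "wH (ed A x y) \<le> wH (Inl y)" if "y \<in> V" for x y
      using that uu le1 by (auto simp: ed_def wHr intro: order_trans)
    have F3: "g x = ES G \<sigma>' \<tau>b g x" if "x \<in> V" for x unfolding g_def using pv_fix[OF cB] that V_def by simp
    have F4: "d s = 0" if "s \<in> sinks G" for s unfolding d_def g_def using wHs[OF that] pv_sink[OF cB that] by simp
    have suppV: "set_pmf (step G \<sigma>1 \<tau>1 x) \<subseteq> V" if "cwf G \<sigma>1 \<tau>1" "x \<in> V" for \<sigma>1 \<tau>1 x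
      using that unfolding cwf_def V_def by blast
    have Sns: "S \<subseteq> V - sinks G" unfolding S_def using F4 Dpos by force
    have Sclosed: "\<forall>x\<in>S. set_pmf (step G \<sigma>' \<tau>b x) \<subseteq> S"
    proof (intro ballI subsetI)
      fix x y assume x: "x \<in> S" and y: "y \<in> set_pmf (step G \<sigma>' \<tau>b x)"
      have xV: "x \<in> V - sinks G" using Sns x by blast
      have "D = d x" using x S_def by simp
      also have "\<dots> \<le> ES G \<sigma>' \<tau>b (\<lambda>y. wH (Inl y)) x - ES G \<sigma>' \<tau>b g x"
      proof -
        have "ES G \<sigma>' \<tau>b (\<lambda>y. wH (ed A x y)) x \<le> ES G \<sigma>' \<tau>b (\<lambda>y. wH (Inl y)) x"
          by (rule ES_mono) (use F2 V_def in auto)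
        then show ?thesis using F1[OF xV] F3[of x] xV by (simp add: d_def)
      qed
      also have "\<dots> = ES G \<sigma>' \<tau>b d x" unfolding d_def by (rule ES_diff[symmetric])
      finally have "D \<le> ES G \<sigma>' \<tau>b d x" .
      then have "d y = D" using avg[OF finV suppV[OF cB] _ _ y] xV dle suppV[OF cB, of x] unfolding ES_def V_def
        by blast
      then show "y \<in> S" using suppV[OF cB, of x] xV y unfolding S_def by auto
    qed
    have g0: "g x = 0" if "x \<in> S" for x
      unfolding g_def by (rule pv_zero[OF cB _ Sclosed that]) (use Sns V_def in auto)
    have wD: "wH (Inl x) = D" if "x \<in> S" for x using that g0[OF that] unfolding S_def d_def by simp
    have edD: "wH (ed A x y) = D" if x: "x \<in> S" and y: "y \<in> set_pmf (step G \<sigma>' \<tau>b x)" for x y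
    proof -
      have xV: "x \<in> V - sinks G" using Sns x by blast
      have yS: "\<forall>y\<in>set_pmf (step G \<sigma>' \<tau>b x). y \<in> S" using Sclosed x by blast
      show ?thesis
      proof (rule avg[OF finV suppV[OF cB] _ _ y, of "\<lambda>y. wH (ed A x y)" D])
        show "x \<in> V" using xV by blast
        show "\<forall>y\<in>set_pmf (step G \<sigma>' \<tau>b x). wH (ed A x y) \<le> D"
          using yS F2 wD S_def by fastforce
        show "D \<le> (\<Sum>y\<in>V. pmf (step G \<sigma>' \<tau>b x) y * wH (ed A x y))"
          using F1[OF xV] wD[OF x] unfolding ES_def V_def by simp
      qed
    qed
    show False
    proof (cases "\<exists>x\<in>S. \<exists>y\<in>set_pmf (step G \<sigma>' \<tau>b x). (x, y) \<in> A")
      case False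
      define SH where "SH = (Inl ` S :: ('v + 'v \<times> 'v) set)"
      have cl: "\<forall>z\<in>SH. set_pmf (step H (L \<sigma>') (L \<tau>b) z) \<subseteq> SH"
      proof
        fix z assume "z \<in> SH"
        then obtain x where z: "z = Inl x" and x: "x \<in> S" unfolding SH_def by blast
        have xV: "x \<in> verts G - sinks G" using Sns x V_def by blast
        have "set_pmf (step H (L \<sigma>') (L \<tau>b) z) = ed A x ` set_pmf (step G \<sigma>' \<tau>b x)"
          unfolding z H_def L_def by (rule TR_supp[OF G A gH[unfolded H_def] xV])
        also have "\<dots> \<subseteq> SH" using False x Sclosed by (auto simp: ed_def SH_def; blast)
        finally show "set_pmf (step H (L \<sigma>') (L \<tau>b) z) \<subseteq> SH" .
      qed
      have "SH \<subseteq> verts H - sinks H" using Sns unfolding H_def V_def SH_def by auto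
      then have "play_value H (L \<sigma>') (L \<tau>b) (Inl x1) = 0" using pv_zero[OF cE _ cl] x1 unfolding SH_def by blast
      moreover have "wH (Inl x1) \<le> play_value H (L \<sigma>') (L \<tau>b) (Inl x1)"
        using brd tbH InlV x1 S_def unfolding wH_def is_best_response_def by blast
      ultimately show False using wD[OF x1] Dpos by simp
    next
      case True
      then obtain x y where x: "x \<in> S" and y: "y \<in> set_pmf (step G \<sigma>' \<tau>b x)" and xyA: "(x, y) \<in> A" by blast
      have yS: "y \<in> S" using Sclosed x y by blast
      have uy: "u y = D" using edD[OF x y] xyA by (simp add: ed_def wHr)
      define R where "R = {z\<in>S. u z = D}"
      have uD: "u z \<le> D" if "z \<in> S" for z using uu le1 wD[OF that] that S_def by fastforce
      have Rcl: "\<forall>z\<in>R. set_pmf (step G \<sigma> \<tau>b z) \<subseteq> R"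
      proof (intro ballI subsetI)
        fix z y' assume z: "z \<in> R" and y': "y' \<in> set_pmf (step G \<sigma> \<tau>b z)"
        have zS: "z \<in> S" and uz: "u z = D" using z R_def by auto
        have zV: "z \<in> V - sinks G" using Sns zS by blast
        have st: "step G \<sigma> \<tau>b z = step G \<sigma>' \<tau>b z"
        proof (rule step_cong_pt)
          assume zm: "z \<in> maxv G"
          have "wH (Inl z) = uH (Inl z)" using wD[OF zS] uz uu le1 zV by fastforce
          then show "\<sigma> z = \<sigma>' z" using eqs zm by auto
        qed simp
        have "D \<le> ES G \<sigma> \<tau>b u z"
        proof (cases "z \<in> minv G")
          case True
          have arc: "(z, \<tau>b z) \<in> arcs G" using tb True by (simp add: is_min_strategy_def)
          have "u z \<le> u (\<tau>b z)" unfolding u_def by (rule bm[OF gG s bra True arc])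
          then show ?thesis using ES_min[OF gG tb True] uz by simp
        next
          case False
          have "u z = ES G \<sigma> \<tau>a u z" unfolding u_def using pv_fix[OF cA] zV V_def by simp
          also have "\<dots> = ES G \<sigma> \<tau>b u z" by (rule ES_cong_pt) (use False in auto)
          finally show ?thesis using uz by simp
        qed
        moreover have sub: "set_pmf (step G \<sigma> \<tau>b z) \<subseteq> S" using st Sclosed zS by simp
        ultimately have "u y' = D"
          using avg[OF finV _ _ _ y', of u D] sub Sns uD unfolding ES_def V_def by blast
        then show "y' \<in> R" using sub y' R_def by auto
      qed
      have cAb: "cwf G \<sigma> \<tau>b" using cwf_of[OF gG s tb] .
      have "play_value G \<sigma> \<tau>b y = 0"
        by (rule pv_zero[OF cAb _ Rcl]) (use Sns yS uy in \<open>auto simp: R_def V_def\<close>)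
      moreover have "u y \<le> play_value G \<sigma> \<tau>b y" using bra tb yS S_def unfolding u_def V_def is_best_response_def by blast
      ultimately show False using uy Dpos by simp
    qed
  qed
  show ?thesis unfolding strat_gt_def mvu mvg V_def[symmetric]
  proof
    show "\<forall>x\<in>V. u x \<le> g x" using uu le1 main by (meson order_trans)
    obtain x where "x \<in> V" "uH (Inl x) \<noteq> wH (Inl x)" using ex1 by blast
    then have "u x < g x" using uu le1 main by (meson order_le_less_trans order_less_le_trans order.not_eq_order_implies_strict)
    then have "u x \<noteq> g x" by simp
    then show "\<exists>x\<in>V. u x \<noteq> g x" using \<open>x \<in> V\<close> by blast
  qed
qed

end
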